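(* Let $c_2,e_3,d_4$ be general homogeneous polynomials in $(u,v)$ of degrees $2,3,4$. The quartic surface $$\mathcal{K}\colon\ (w^2-uv)\,y^2 = c_2(u,v)w^2 + e_3(u,v)w + d_4(u,v)$$ in $\mathbb{P}^3=\mathbb{P}(u,v,w,y)$ has two rational double point singularities of type $\mathbf{A}_1$, at $\mathrm{p}_1=[0:0:0:1]$ and $\mathrm{p}_2=[0:0:1:0]$. *)

theory Defs
  imports "HOL-Analysis.Analysis"
begin

text \<open>Points of P^3 = P(u,v,w,y) are represented by nonzero vectors in complex^4,
  with coordinates u = x$1, v = x$2, w = x$3, y = x$4.\<close>

definition coord_u :: "complex^4 \<Rightarrow> complex" where "coord_u x = x $ 1"
definition coord_v :: "complex^4 \<Rightarrow> complex" where "coord_v x = x $ 2"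
definition coord_w :: "complex^4 \<Rightarrow> complex" where "coord_w x = x $ 3"
definition coord_y :: "complex^4 \<Rightarrow> complex" where "coord_y x = x $ 4"

definition bform :: "(nat \<Rightarrow> complex) \<Rightarrow> nat \<Rightarrow> complex \<Rightarrow> complex \<Rightarrow> complex" where
  "bform c n u v = (\<Sum>i\<le>n. c i * u ^ i * v ^ (n - i))"

definition c2 :: "(nat \<Rightarrow> complex) \<Rightarrow> complex \<Rightarrow> complex \<Rightarrow> complex" where
  "c2 a = bform (\<lambda>i. a i) 2"
definition e3 :: "(nat \<Rightarrow> complex) \<Rightarrow> complex \<Rightarrow> complex \<Rightarrow> complex" where
  "e3 a = bform (\<lambda>i. a (3 + i)) 3"
definition d4 :: "(nat \<Rightarrow> complex) \<Rightarrow> complex \<Rightarrow> complex \<Rightarrow> complex" where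
  "d4 a = bform (\<lambda>i. a (7 + i)) 4"

definition quarticK :: "(nat \<Rightarrow> complex) \<Rightarrow> complex^4 \<Rightarrow> complex" where
  "quarticK a x =
     ((coord_w x)^2 - coord_u x * coord_v x) * (coord_y x)^2
     - (c2 a (coord_u x) (coord_v x) * (coord_w x)^2
        + e3 a (coord_u x) (coord_v x) * coord_w x + d4 a (coord_u x) (coord_v x))"

definition p1 :: "complex^4" where "p1 = (\<chi> i. if i = 4 then 1 else 0)"
definition p2 :: "complex^4" where "p2 = (\<chi> i. if i = 3 then 1 else 0)"

definition pderiv4 :: "(complex^4 \<Rightarrow> complex) \<Rightarrow> 4 \<Rightarrow> complex^4 \<Rightarrow> complex" where
  "pderiv4 G i x = deriv (\<lambda>t. G (x + t *s axis i 1)) 0"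

definition hessian4 :: "(complex^4 \<Rightarrow> complex) \<Rightarrow> complex^4 \<Rightarrow> complex^4^4" where
  "hessian4 G x = (\<chi> i j. pderiv4 (pderiv4 G j) i x)"

definition sing_point :: "(complex^4 \<Rightarrow> complex) \<Rightarrow> complex^4 \<Rightarrow> bool" where
  "sing_point G x \<longleftrightarrow> x \<noteq> 0 \<and> G x = 0 \<and> (\<forall>i. pderiv4 G i x = 0)"

text \<open>A_1 (ordinary double point / node) of a surface G = 0 in P^3: a singular point whose
  tangent cone is a nondegenerate quadric, i.e. the 4x4 Hessian of the homogeneous form
  has rank 3 (corank 1, the kernel being spanned by the point itself).\<close>
definition A1_point :: "(complex^4 \<Rightarrow> complex) \<Rightarrow> complex^4 \<Rightarrow> bool" where
  "A1_point G x \<longleftrightarrow> sing_point G x \<and> rank (hessian4 G x) = 3"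

text \<open>Polynomial functions of the coefficients (used to express "general").\<close>
inductive_set polyfun :: "((nat \<Rightarrow> complex) \<Rightarrow> complex) set" where
  pf_const: "(\<lambda>a. c) \<in> polyfun"
| pf_var: "(\<lambda>a. a i) \<in> polyfun"
| pf_add: "P \<in> polyfun \<Longrightarrow> Q \<in> polyfun \<Longrightarrow> (\<lambda>a. P a + Q a) \<in> polyfun"
| pf_mult: "P \<in> polyfun \<Longrightarrow> Q \<in> polyfun \<Longrightarrow> (\<lambda>a. P a * Q a) \<in> polyfun"

end

theory Submission
  imports Defs
begin

lemma polyfun_sum: "finite S \<Longrightarrow> (\<And>x. x\<in>S \<Longrightarrow> f x \<in> polyfun) \<Longrightarrow> (\<lambda>a. \<Sum>x\<in>S. f x a) \<in> polyfun"
proof (induction S rule: finite_induct)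
  case empty then show ?case by (simp add: polyfun.pf_const)
next
  case (insert x F) then show ?case by (simp add: polyfun.pf_add)
qed

lemma polyfun_prod: "finite S \<Longrightarrow> (\<And>x. x\<in>S \<Longrightarrow> f x \<in> polyfun) \<Longrightarrow> (\<lambda>a. \<Prod>x\<in>S. f x a) \<in> polyfun"
proof (induction S rule: finite_induct)
  case empty then show ?case by (simp add: polyfun.pf_const)
next
  case (insert x F) then show ?case by (simp add: polyfun.pf_mult)
qed

lemma polyfun_line: "P \<in> polyfun \<Longrightarrow> \<exists>p. \<forall>z. P (\<lambda>i. a i + z * (b i - a i)) = poly p z"
proof (induction rule: polyfun.induct)
  case (pf_const c) then show ?case by (intro exI[of _ "[:c:]"]) simp
next
  case (pf_var i) then show ?case by (intro exI[of _ "[:a i, b i - a i:]"]) simp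
next
  case (pf_add P Q) then obtain p q where "\<forall>z. P (\<lambda>i. a i + z * (b i - a i)) = poly p z"
    "\<forall>z. Q (\<lambda>i. a i + z * (b i - a i)) = poly q z" by blast
  then show ?case by (intro exI[of _ "p + q"]) simp
next
  case (pf_mult P Q) then obtain p q where "\<forall>z. P (\<lambda>i. a i + z * (b i - a i)) = poly p z"
    "\<forall>z. Q (\<lambda>i. a i + z * (b i - a i)) = poly q z" by blast
  then show ?case by (intro exI[of _ "p * q"]) simp
qed

lemma polyfun_mult_nz:
  assumes "P \<in> polyfun" "Q \<in> polyfun" "P a \<noteq> 0" "Q b \<noteq> 0"
  shows "\<exists>c. P c * Q c \<noteq> 0"
proof -
  obtain p where p: "\<forall>z. P (\<lambda>i. a i + z * (b i - a i)) = poly p z" using polyfun_line assms(1) by blast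
  obtain q where q: "\<forall>z. Q (\<lambda>i. a i + z * (b i - a i)) = poly q z" using polyfun_line assms(2) by blast
  have "poly p 0 \<noteq> 0" using p[rule_format, of 0] assms(3) by simp
  then have "p \<noteq> 0" by auto
  have "poly q 1 \<noteq> 0" using q[rule_format, of 1] assms(4) by simp
  then have "q \<noteq> 0" by auto
  then have "p * q \<noteq> 0" using \<open>p \<noteq> 0\<close> by simp
  then obtain z where "poly (p * q) z \<noteq> 0" using poly_all_0_iff_0 by blast
  then show ?thesis using p q by (intro exI[of _ "\<lambda>i. a i + z * (b i - a i)"]) simp
qed

definition bpf :: "((nat\<Rightarrow>complex) \<Rightarrow> complex \<Rightarrow> complex \<Rightarrow> complex) \<Rightarrow> nat \<Rightarrow> bool" where
 "bpf \<Phi> n \<longleftrightarrow> (\<exists>\<alpha>. (\<forall>i. \<alpha> i \<in> polyfun) \<and> (\<forall>a u v. \<Phi> a u v = (\<Sum>i\<le>n. \<alpha> i a * u^i * v^(n-i))))"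

lemma bpf_cong: "bpf \<Phi> n \<Longrightarrow> (\<And>a u v. \<Psi> a u v = \<Phi> a u v) \<Longrightarrow> bpf \<Psi> n"
  unfolding bpf_def by metis

lemma bpf_mono: assumes "P \<in> polyfun" "i \<le> n" shows "bpf (\<lambda>a u v. P a * u^i * v^(n-i)) n"
  unfolding bpf_def
proof (intro exI[of _ "\<lambda>k a. if k = i then P a else 0"] conjI allI)
  fix k show "(\<lambda>a. if k = i then P a else 0) \<in> polyfun"
    using assms(1) by (cases "k = i") (auto intro: polyfun.pf_const)
next
  fix a u v
  have "(\<Sum>k\<le>n. (if k = i then P a else 0) * u ^ k * v ^ (n - k)) =
     (\<Sum>k\<le>n. if k = i then P a * u ^ k * v ^ (n - k) else 0)"
    by (rule sum.cong) auto
  also have "\<dots> = P a * u^i * v^(n-i)" using assms(2) by simp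
  finally show "P a * u ^ i * v ^ (n - i) = (\<Sum>k\<le>n. (if k = i then P a else 0) * u ^ k * v ^ (n - k))" by simp
qed

lemma bpf_zero: "bpf (\<lambda>a u v. 0) n"
  unfolding bpf_def by (intro exI[of _ "\<lambda>k a. 0"]) (auto intro: polyfun.pf_const)

lemma bpf_add: assumes "bpf \<Phi> n" "bpf \<Psi> n" shows "bpf (\<lambda>a u v. \<Phi> a u v + \<Psi> a u v) n"
proof -
  obtain \<alpha> where A: "\<forall>i. \<alpha> i \<in> polyfun" "\<forall>a u v. \<Phi> a u v = (\<Sum>i\<le>n. \<alpha> i a * u^i * v^(n-i))"
    using assms(1) unfolding bpf_def by blast
  obtain \<beta> where B: "\<forall>i. \<beta> i \<in> polyfun" "\<forall>a u v. \<Psi> a u v = (\<Sum>i\<le>n. \<beta> i a * u^i * v^(n-i))"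
    using assms(2) unfolding bpf_def by blast
  show ?thesis unfolding bpf_def
    apply (intro exI[of _ "\<lambda>k a. \<alpha> k a + \<beta> k a"] conjI allI)
    using A B by (auto intro: polyfun.pf_add simp: sum.distrib[symmetric] algebra_simps)
qed

lemma bpf_sum: "finite S \<Longrightarrow> (\<And>x. x \<in> S \<Longrightarrow> bpf (\<Phi> x) n) \<Longrightarrow> bpf (\<lambda>a u v. \<Sum>x\<in>S. \<Phi> x a u v) n"
proof (induction S rule: finite_induct)
  case empty then show ?case by (simp add: bpf_zero)
next
  case (insert x F) then show ?case using bpf_add[of "\<Phi> x" n "\<lambda>a u v. \<Sum>x\<in>F. \<Phi> x a u v"] by simp
qed

lemma bpf_mult: assumes "bpf \<Phi> m" "bpf \<Psi> n" shows "bpf (\<lambda>a u v. \<Phi> a u v * \<Psi> a u v) (m+n)"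
proof -
  obtain \<alpha> where A: "\<forall>i. \<alpha> i \<in> polyfun" "\<forall>a u v. \<Phi> a u v = (\<Sum>i\<le>m. \<alpha> i a * u^i * v^(m-i))"
    using assms(1) unfolding bpf_def by blast
  obtain \<beta> where B: "\<forall>i. \<beta> i \<in> polyfun" "\<forall>a u v. \<Psi> a u v = (\<Sum>i\<le>n. \<beta> i a * u^i * v^(n-i))"
    using assms(2) unfolding bpf_def by blast
  have "bpf (\<lambda>a u v. \<Sum>i\<le>m. \<Sum>j\<le>n. (\<alpha> i a * \<beta> j a) * u^(i+j) * v^(m+n-(i+j))) (m+n)"
    apply (rule bpf_sum, simp)+
    apply (rule bpf_mono)
    using A B by (auto intro: polyfun.pf_mult)
  then show ?thesis
  proof (rule bpf_cong)
    fix a u v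
    have eq: "\<And>i j. i \<le> m \<Longrightarrow> j \<le> n \<Longrightarrow> (\<alpha> i a * u^i * v^(m-i)) * (\<beta> j a * u^j * v^(n-j)) =
       (\<alpha> i a * \<beta> j a) * u^(i+j) * v^(m+n-(i+j))"
    proof -
      fix i j assume "i \<le> m" "j \<le> n"
      then have "m+n-(i+j) = (m-i) + (n-j)" by simp
      then show "(\<alpha> i a * u^i * v^(m-i)) * (\<beta> j a * u^j * v^(n-j)) =
       (\<alpha> i a * \<beta> j a) * u^(i+j) * v^(m+n-(i+j))" by (simp add: power_add algebra_simps)
    qed
    have "\<Phi> a u v * \<Psi> a u v = (\<Sum>i\<le>m. \<Sum>j\<le>n. (\<alpha> i a * u^i * v^(m-i)) * (\<beta> j a * u^j * v^(n-j)))"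
      using A B by (simp add: sum_product)
    also have "\<dots> = (\<Sum>i\<le>m. \<Sum>j\<le>n. \<alpha> i a * \<beta> j a * u ^ (i + j) * v ^ (m + n - (i + j)))"
      by (intro sum.cong refl) (simp add: eq)
    finally show "\<Phi> a u v * \<Psi> a u v = (\<Sum>i\<le>m. \<Sum>j\<le>n. \<alpha> i a * \<beta> j a * u ^ (i + j) * v ^ (m + n - (i + j)))" .
  qed
qed

lemma bpf_scale: assumes "bpf \<Phi> n" shows "bpf (\<lambda>a u v. k * \<Phi> a u v) n"
proof -
  have "bpf (\<lambda>a u v. (k * u^0 * v^(0-0)) * \<Phi> a u v) (0+n)"
    by (rule bpf_mult[OF bpf_mono assms]) (auto intro: polyfun.pf_const)
  then show ?thesis by simp
qed

lemma bpf_sub: "bpf \<Phi> n \<Longrightarrow> bpf \<Psi> n \<Longrightarrow> bpf (\<lambda>a u v. \<Phi> a u v - \<Psi> a u v) n"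
  using bpf_add[of \<Phi> n "\<lambda>a u v. (-1) * \<Psi> a u v"] bpf_scale[of \<Psi> n "-1"] by simp

lemma bpf_sq: assumes "bpf \<Phi> n" shows "bpf (\<lambda>a s t. \<Phi> a (s^2) (t^2)) (2*n)"
proof -
  obtain \<alpha> where A: "\<forall>i. \<alpha> i \<in> polyfun" "\<forall>a u v. \<Phi> a u v = (\<Sum>i\<le>n. \<alpha> i a * u^i * v^(n-i))"
    using assms(1) unfolding bpf_def by blast
  have "bpf (\<lambda>a s t. \<Sum>i\<le>n. \<alpha> i a * s^(2*i) * t^(2*n - 2*i)) (2*n)"
    by (rule bpf_sum, simp, rule bpf_mono) (use A in auto)
  then show ?thesis
    by (rule bpf_cong) (auto simp: A power_mult[symmetric] diff_mult_distrib2 intro!: sum.cong)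
qed

lemma bpf_var: "bpf (\<lambda>a u v. u) 1" "bpf (\<lambda>a u v. v) 1"
  using bpf_mono[of "\<lambda>a. 1" 1 1] bpf_mono[of "\<lambda>a. 1" 0 1] by (auto intro: polyfun.pf_const)

lemma bpf_coef: "bpf (\<lambda>a u v. k * a j * u^i * v^(n-i)) n" if "i \<le> n"
  using bpf_mono[of "\<lambda>a. k * a j" i n] that polyfun.pf_mult[OF polyfun.pf_const polyfun.pf_var, of k j] by simp

definition sylm :: "(nat\<Rightarrow>complex) \<Rightarrow> nat \<Rightarrow> (nat\<Rightarrow>complex) \<Rightarrow> nat \<Rightarrow> nat \<Rightarrow> nat \<Rightarrow> complex" where
 "sylm \<alpha> m \<beta> n r c = (if r < n then (if r \<le> c \<and> c \<le> r + m then \<alpha> (c - r) else 0)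
                       else (if r - n \<le> c \<and> c \<le> r - n + n then \<beta> (c - (r - n)) else 0))"

lemma shift_row:
  fixes g :: "nat \<Rightarrow> complex"
  assumes "q + k < N"
  shows "(\<Sum>c<N. (if q \<le> c \<and> c \<le> q + k then g (c - q) else 0) * (u^c * v^(N-1-c)))
        = u^q * v^(N-1-k-q) * (\<Sum>i\<le>k. g i * u^i * v^(k-i))"
proof -
  have "(\<Sum>c<N. (if q \<le> c \<and> c \<le> q + k then g (c - q) else 0) * (u^c * v^(N-1-c)))
      = (\<Sum>c<N. if c \<in> {q..q+k} then g (c - q) * (u^c * v^(N-1-c)) else 0)"
    by (intro sum.cong) auto
  also have "\<dots> = (\<Sum>c\<in>{..<N} \<inter> {q..q+k}. g (c - q) * (u^c * v^(N-1-c)))"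
    by (rule sum.inter_restrict[symmetric, OF finite_lessThan])
  also have "{..<N} \<inter> {q..q+k} = {0+q..k+q}" using assms by auto
  also have "(\<Sum>c\<in>{0+q..k+q}. g (c - q) * (u^c * v^(N-1-c))) = (\<Sum>i\<in>{0..k}. g i * (u^(i+q) * v^(N-1-(i+q))))"
    by (subst sum.shift_bounds_cl_nat_ivl) simp
  also have "\<dots> = (\<Sum>i\<le>k. u^q * v^(N-1-k-q) * (g i * u^i * v^(k-i)))"
  proof (intro sum.cong)
    fix i assume "i \<in> {..k}"
    then have "N-1-(i+q) = (N-1-k-q) + (k - i)" using assms by auto
    then show "g i * (u^(i+q) * v^(N-1-(i+q))) = u^q * v^(N-1-k-q) * (g i * u^i * v^(k-i))"
      by (simp add: power_add algebra_simps)
  qed (auto simp: atLeast0AtMost)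
  finally show ?thesis by (simp add: sum_distrib_left)
qed

lemma sylm_row:
  assumes "r < m + n" and A: "(\<Sum>i\<le>m. \<alpha> i * u^i * v^(m-i)) = 0" and B: "(\<Sum>j\<le>n. \<beta> j * u^j * v^(n-j)) = 0"
  shows "(\<Sum>c<m+n. sylm \<alpha> m \<beta> n r c * (u^c * v^(m+n-1-c))) = 0"
proof (cases "r < n")
  case True
  then have "(\<Sum>c<m+n. sylm \<alpha> m \<beta> n r c * (u^c * v^(m+n-1-c)))
     = (\<Sum>c<m+n. (if r \<le> c \<and> c \<le> r + m then \<alpha> (c - r) else 0) * (u^c * v^(m+n-1-c)))"
    by (simp add: sylm_def)
  also have "\<dots> = u^r * v^(m+n-1-m-r) * (\<Sum>i\<le>m. \<alpha> i * u^i * v^(m-i))"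
    by (rule shift_row) (use True in simp)
  finally show ?thesis using A by simp
next
  case False
  then have "(\<Sum>c<m+n. sylm \<alpha> m \<beta> n r c * (u^c * v^(m+n-1-c)))
     = (\<Sum>c<m+n. (if r - n \<le> c \<and> c \<le> r - n + n then \<beta> (c - (r - n)) else 0) * (u^c * v^(m+n-1-c)))"
    by (simp add: sylm_def)
  also have "\<dots> = u^(r-n) * v^(m+n-1-n-(r-n)) * (\<Sum>i\<le>n. \<beta> i * u^i * v^(n-i))"
    by (rule shift_row) (use False assms(1) in simp)
  finally show ?thesis using B by simp
qed

lemma syl_det_zero:
  fixes idx :: "'n::finite \<Rightarrow> nat"
  assumes bij: "bij_betw idx UNIV {..<m+n}"
    and A: "(\<Sum>i\<le>m. \<alpha> i * u^i * v^(m-i)) = 0" and B: "(\<Sum>j\<le>n. \<beta> j * u^j * v^(n-j)) = 0"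
    and uv: "u \<noteq> 0 \<or> v \<noteq> 0"
  shows "det ((\<chi> i j. sylm \<alpha> m \<beta> n (idx i) (idx j)) :: complex^'n^'n) = 0"
proof -
  define M where "M = ((\<chi> i j. sylm \<alpha> m \<beta> n (idx i) (idx j)) :: complex^'n^'n)"
  define x where "x = ((\<chi> j. u^(idx j) * v^(m+n-1-idx j)) :: complex^'n)"
  have Mx: "M *v x = 0"
  unfolding vec_eq_iff
  proof
    fix i
    have "(M *v x) $ i = (\<Sum>j\<in>UNIV. sylm \<alpha> m \<beta> n (idx i) (idx j) * (u^(idx j) * v^(m+n-1-idx j)))"
      by (simp add: M_def x_def matrix_vector_mult_def)
    also have "\<dots> = (\<Sum>c<m+n. sylm \<alpha> m \<beta> n (idx i) c * (u^c * v^(m+n-1-c)))"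
      using sum.reindex_bij_betw[OF bij, of "\<lambda>c. sylm \<alpha> m \<beta> n (idx i) c * (u^c * v^(m+n-1-c))"] by simp
    also have "\<dots> = 0"
      by (rule sylm_row[OF _ A B]) (use bij in \<open>auto simp: bij_betw_def\<close>)
    finally show "(M *v x) $ i = 0 $ i" by simp
  qed
  have N: "0 < m + n"
  proof -
    have "idx undefined \<in> {..<m+n}" using bij by (auto simp: bij_betw_def)
    then show ?thesis by auto
  qed
  have "x \<noteq> 0"
  proof (cases "u = 0")
    case True
    then have "v \<noteq> 0" using uv by simp
    obtain j where "idx j = 0" using bij N by (metis bij_betw_iff_bijections lessThan_iff)
    then have "x $ j \<noteq> 0" using \<open>v \<noteq> 0\<close> by (simp add: x_def)
    then show ?thesis by auto
  next
    case False
    obtain j where "idx j = m+n-1" using bij N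
      by (metis bij_betw_iff_bijections diff_less lessThan_iff zero_less_one)
    then have "x $ j \<noteq> 0" using False by (simp add: x_def)
    then show ?thesis by auto
  qed
  have "\<not> inj ((*v) M)"
    using Mx \<open>x \<noteq> 0\<close> by (metis inj_def matrix_vector_mult_0_right)
  then have "det (matrix ((*v) M)) = 0"
    using det_nz_iff_inj_gen[of "(*v) M"] matrix_vector_mul_linear_gen by blast
  then show ?thesis by (simp add: M_def)
qed

lemma polyfun_if: "P \<in> polyfun \<Longrightarrow> Q \<in> polyfun \<Longrightarrow> (\<lambda>a. if C then P a else Q a) \<in> polyfun"
  by (cases C) simp_all

lemma syl_det_polyfun:
  fixes idx :: "'n::finite \<Rightarrow> nat"
  assumes "\<forall>i. \<alpha> i \<in> polyfun" "\<forall>i. \<beta> i \<in> polyfun"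
  shows "(\<lambda>a. det ((\<chi> i j. sylm (\<lambda>k. \<alpha> k a) m (\<lambda>k. \<beta> k a) n (idx i) (idx j)) :: complex^'n^'n)) \<in> polyfun"
proof -
  have E: "(\<lambda>a. sylm (\<lambda>k. \<alpha> k a) m (\<lambda>k. \<beta> k a) n r c) \<in> polyfun" for r c
    unfolding sylm_def using assms
    by (intro polyfun_if) (auto intro: polyfun.pf_const)
  show ?thesis
    unfolding det_def
    apply (rule polyfun_sum, simp)
    apply (rule polyfun.pf_mult[OF polyfun.pf_const])
    apply (rule polyfun_prod, simp)
    using E by simp
qed

lemma syl_det_diag:
  fixes idx :: "'n::finite \<Rightarrow> nat"
  assumes bij: "bij_betw idx UNIV {..<m+n}"
    and A: "\<forall>k. 0 < k \<and> k \<le> m \<longrightarrow> \<alpha> k = 0" "\<alpha> 0 \<noteq> 0" and B: "\<forall>k. k < n \<longrightarrow> \<beta> k = 0" "\<beta> n \<noteq> 0"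
  shows "det ((\<chi> i j. sylm \<alpha> m \<beta> n (idx i) (idx j)) :: complex^'n^'n) \<noteq> 0"
proof -
  have inj: "inj idx" using bij by (simp add: bij_betw_def)
  have off: "sylm \<alpha> m \<beta> n r c = 0" if "r \<noteq> c" for r c
    using that A B unfolding sylm_def by auto
  have dg: "sylm \<alpha> m \<beta> n r r \<noteq> 0" for r
    using A B unfolding sylm_def by auto
  have "det ((\<chi> i j. sylm \<alpha> m \<beta> n (idx i) (idx j)) :: complex^'n^'n) = (\<Prod>i\<in>UNIV. sylm \<alpha> m \<beta> n (idx i) (idx i))"
    by (subst det_diagonal) (use off inj in \<open>auto simp: inj_def\<close>)
  also have "\<dots> \<noteq> 0" using dg by simp
  finally show ?thesis .
qed

lemma c2e: "c2 a u v = (a 0) * v^2 + (a 1) * u * v + (a 2) * u^2"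
 by (simp add: c2_def bform_def eval_nat_numeral)
lemma e3e: "e3 a u v = (a 3) * v^3 + (a 4) * u * v^2 + (a 5) * u^2 * v + (a 6) * u^3"
 by (simp add: e3_def bform_def eval_nat_numeral)
lemma d4e: "d4 a u v = (a 7) * v^4 + (a 8) * u * v^3 + (a 9) * u^2 * v^2 + (a 10) * u^3 * v + (a 11) * u^4"
 by (simp add: d4_def bform_def eval_nat_numeral)

definition "cu a u v = (a 1) * v + 2 * (a 2) * u"
definition "cv a u v = 2 * (a 0) * v + (a 1) * u"
definition "eu a u v = (a 4) * v^2 + 2 * (a 5) * u * v + 3 * (a 6) * u^2"
definition "ev a u v = 3 * (a 3) * v^2 + 2 * (a 4) * u * v + (a 5) * u^2"
definition "du a u v = (a 8) * v^3 + 2 * (a 9) * u * v^2 + 3 * (a 10) * u^2 * v + 4 * (a 11) * u^3"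
definition "dv a u v = 4 * (a 7) * v^3 + 3 * (a 8) * u * v^2 + 2 * (a 9) * u^2 * v + (a 10) * u^3"

definition "Fq a u v w y = (w^2 - u * v) * y^2 - (c2 a u v * w^2 + e3 a u v * w + d4 a u v)"
definition "Fu a u v w y = -v * y^2 - (cu a u v * w^2 + eu a u v * w + du a u v)"
definition "Fv a u v w y = -u * y^2 - (cv a u v * w^2 + ev a u v * w + dv a u v)"
definition "Fw a u v w y = 2 * w * y^2 - (2 * c2 a u v * w + e3 a u v)"
definition "Fy (u::complex) v w y = 2 * (w^2 - u * v) * y"
definition "Dq a z1 z2 z3 z4 u v w y = z1 * Fu a u v w y + z2 * Fv a u v w y + z3 * Fw a u v w y + z4 * Fy u v w y"

lemma Fq_deriv:
 "((\<lambda>t. Fq a (u + t * z1) (v + t * z2) (w + t * z3) (y + t * z4)) has_field_derivative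
   Dq a z1 z2 z3 z4 u v w y) (at 0)"
 unfolding Fq_def Dq_def Fu_def Fv_def Fw_def Fy_def c2e e3e d4e cu_def cv_def eu_def ev_def du_def dv_def
 apply (rule derivative_eq_intros refl | simp)+
  apply (simp add: algebra_simps power2_eq_square power3_eq_cube)?
 done


definition "dl (i::4) (k::4) = (if k = i then 1 else (0::complex))"

lemma quarticK_coords: "quarticK a x = Fq a (x$1) (x$2) (x$3) (x$4)"
  by (simp add: quarticK_def Fq_def coord_u_def coord_v_def coord_w_def coord_y_def)

lemma line_coord: "(x + t *s axis i 1) $ k = x$k + t * dl i k"
  by (simp add: axis_def dl_def)

lemma pderiv_K: "pderiv4 (quarticK a) i x = Dq a (dl i 1) (dl i 2) (dl i 3) (dl i 4) (x$1) (x$2) (x$3) (x$4)"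
  unfolding pderiv4_def quarticK_coords line_coord
  by (rule DERIV_imp_deriv[OF Fq_deriv])

lemma pderiv_K_fun: "pderiv4 (quarticK a) j = (\<lambda>x. Dq a (dl j 1) (dl j 2) (dl j 3) (dl j 4) (x$1) (x$2) (x$3) (x$4))"
  using pderiv_K by blast

lemma hess_p1_deriv:
  "((\<lambda>t. Dq a q1 q2 q3 q4 (0 + t*z1) (0 + t*z2) (0 + t*z3) (1 + t*z4)) has_field_derivative
     (- (z1*q2) - z2*q1 + 2*z3*q3)) (at 0)"
  unfolding Dq_def Fu_def Fv_def Fw_def Fy_def c2e e3e d4e cu_def cv_def eu_def ev_def du_def dv_def
  apply (rule derivative_eq_intros refl | simp)+
  apply (simp add: algebra_simps power2_eq_square power3_eq_cube)?
  done

lemma hess_p2_deriv: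
  "((\<lambda>t. Dq a q1 q2 q3 q4 (0 + t*z1) (0 + t*z2) (1 + t*z3) (0 + t*z4)) has_field_derivative
     (-2*a 2*z1*q1 - a 1*(z1*q2 + z2*q1) - 2*a 0*z2*q2 + 2*z4*q4)) (at 0)"
  unfolding Dq_def Fu_def Fv_def Fw_def Fy_def c2e e3e d4e cu_def cv_def eu_def ev_def du_def dv_def
  apply (rule derivative_eq_intros refl | simp)+
  apply (simp add: algebra_simps power2_eq_square power3_eq_cube)?
  done

lemma p1c: "p1$1 = 0" "p1$2 = 0" "p1$3 = 0" "p1$4 = 1"
  by (simp_all add: p1_def)
lemma p2c: "p2$1 = 0" "p2$2 = 0" "p2$3 = 1" "p2$4 = 0"
  by (simp_all add: p2_def)

lemma hess_p1: "hessian4 (quarticK a) p1 = (\<chi> i j. - (dl i 1 * dl j 2) - dl i 2 * dl j 1 + 2 * dl i 3 * dl j 3)"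
  unfolding hessian4_def pderiv_K_fun pderiv4_def line_coord
  by (intro arg_cong[where f=vec_lambda] ext DERIV_imp_deriv) (use hess_p1_deriv in \<open>simp add: p1c\<close>)

lemma hess_p2: "hessian4 (quarticK a) p2 = (\<chi> i j. -2*a 2*dl i 1*dl j 1 - a 1*(dl i 1*dl j 2 + dl i 2*dl j 1) - 2*a 0*dl i 2*dl j 2 + 2*dl i 4*dl j 4)"
  unfolding hessian4_def pderiv_K_fun pderiv4_def line_coord
  by (intro arg_cong[where f=vec_lambda] ext DERIV_imp_deriv) (use hess_p2_deriv in \<open>simp add: p2c\<close>)

lemma dim3:
  fixes x y z :: "complex^4"
  assumes "z \<noteq> 0" "\<forall>k. y \<noteq> k *s z" "\<forall>k k'. x \<noteq> k *s y + k' *s z"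
  shows "vec.dim {x,y,z,0} = 3"
proof -
  have s0: "vec.span {0::complex^4} = {0}" by (simp add: vec.span_insert_0)
  have d1: "vec.dim {z, 0} = 1"
    using assms(1) by (simp add: vec.dim_insert s0)
  have s1: "vec.span {z, 0} = range (\<lambda>k. k *s z)"
  proof -
    have "{z, 0} = insert 0 {z}" by auto
    then show ?thesis by (simp add: vec.span_insert_0 vec.span_singleton)
  qed
  have d2: "vec.dim {y, z, 0} = 2"
    using assms(2) d1 by (subst vec.dim_insert) (auto simp: s1)
  have "x \<notin> vec.span {y, z, 0}"
  proof
    assume "x \<in> vec.span {y, z, 0}"
    then obtain k where "x - k *s y \<in> vec.span {z, 0}" by (auto simp: vec.span_insert)
    then obtain k' where "x - k *s y = k' *s z" by (auto simp: s1)
    then have "x = k *s y + k' *s z" by (simp add: algebra_simps)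
    then show False using assms(3) by blast
  qed
  then show ?thesis using d2 by (subst vec.dim_insert) simp
qed

lemma rows4: "rows (A::complex^4^4) = {row 1 A, row 2 A, row 3 A, row 4 A}"
  unfolding rows_def apply auto by (metis exhaust_4)

lemma rank_p1: "rank (hessian4 (quarticK a) p1) = 3"
proof -
  let ?H = "hessian4 (quarticK a) p1"
  have "rows ?H = {row 1 ?H, row 2 ?H, row 3 ?H, 0}"
    unfolding rows4 by (simp add: hess_p1 row_def dl_def zero_vec_def[symmetric])
  moreover have "vec.dim {row 1 ?H, row 2 ?H, row 3 ?H, 0} = 3"
    by (rule dim3) (auto simp: hess_p1 row_def vec_eq_iff dl_def forall_4)
  ultimately show ?thesis by (simp add: row_rank_def_gen)
qed

lemma rank_p2:
  assumes "4 * a 0 * a 2 - (a 1)^2 \<noteq> 0"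
  shows "rank (hessian4 (quarticK a) p2) = 3"
proof -
  let ?H = "hessian4 (quarticK a) p2"
  have "rows ?H = {row 1 ?H, row 2 ?H, row 4 ?H, 0}"
    unfolding rows4 by (auto simp: hess_p2 row_def vec_eq_iff dl_def)
  moreover have "vec.dim {row 1 ?H, row 2 ?H, row 4 ?H, 0} = 3"
  proof (rule dim3)
    show "row 4 ?H \<noteq> 0" by (auto simp: hess_p2 row_def vec_eq_iff dl_def)
    show "\<forall>k. row 2 ?H \<noteq> k *s row 4 ?H"
    proof (intro allI notI)
      fix k assume "row 2 ?H = k *s row 4 ?H"
      then have "a 1 = 0" "a 0 = 0" unfolding vec_eq_iff forall_4 by (auto simp: hess_p2 row_def dl_def)
      then show False using assms by simp
    qed
    show "\<forall>k k'. row 1 ?H \<noteq> k *s row 2 ?H + k' *s row 4 ?H"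
    proof (intro allI notI)
      fix k k' assume "row 1 ?H = k *s row 2 ?H + k' *s row 4 ?H"
      then have "- 2 * a 2 = - k * a 1" "- a 1 = - 2 * k * a 0"
        unfolding vec_eq_iff forall_4 by (auto simp: hess_p2 row_def dl_def)
      then have "4 * a 0 * a 2 - (a 1)^2 = 0" by (simp add: algebra_simps power2_eq_square)
      then show False using assms by simp
    qed
  qed
  ultimately show ?thesis by (simp add: row_rank_def_gen)
qed

lemma bpf_lin: "bpf (\<lambda>a u v. \<Sum>i\<le>n. of_nat (f i) * a (j + i) * u^i * v^(n-i)) n"
  unfolding bpf_def
  by (intro exI[of _ "\<lambda>i a. of_nat (f i) * a (j + i)"] conjI allI)
     (auto intro: polyfun.pf_mult[OF polyfun.pf_const polyfun.pf_var])

lemma bpf_c2: "bpf c2 2"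
  by (rule bpf_cong[OF bpf_lin[of "\<lambda>i. 1" 0 2]]) (simp add: c2e eval_nat_numeral algebra_simps)
lemma bpf_e3: "bpf e3 3"
  by (rule bpf_cong[OF bpf_lin[of "\<lambda>i. 1" 3 3]]) (simp add: e3e eval_nat_numeral algebra_simps)
lemma bpf_d4: "bpf d4 4"
  by (rule bpf_cong[OF bpf_lin[of "\<lambda>i. 1" 7 4]]) (simp add: d4e eval_nat_numeral algebra_simps)
lemma bpf_cu: "bpf cu 1"
  by (rule bpf_cong[OF bpf_lin[of "\<lambda>i. i+1" 1 1]]) (simp add: cu_def eval_nat_numeral algebra_simps)
lemma bpf_cv: "bpf cv 1"
  by (rule bpf_cong[OF bpf_lin[of "\<lambda>i. 2-i" 0 1]]) (simp add: cv_def eval_nat_numeral algebra_simps)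
lemma bpf_eu: "bpf eu 2"
  by (rule bpf_cong[OF bpf_lin[of "\<lambda>i. i+1" 4 2]]) (simp add: eu_def eval_nat_numeral algebra_simps)
lemma bpf_ev: "bpf ev 2"
  by (rule bpf_cong[OF bpf_lin[of "\<lambda>i. 3-i" 3 2]]) (simp add: ev_def eval_nat_numeral algebra_simps)
lemma bpf_du: "bpf du 3"
  by (rule bpf_cong[OF bpf_lin[of "\<lambda>i. i+1" 8 3]]) (simp add: du_def eval_nat_numeral algebra_simps)
lemma bpf_dv: "bpf dv 3"
  by (rule bpf_cong[OF bpf_lin[of "\<lambda>i. 4-i" 7 3]]) (simp add: dv_def eval_nat_numeral algebra_simps)

definition "Du a u v = 2 * e3 a u v * eu a u v - 4 * cu a u v * d4 a u v - 4 * c2 a u v * du a u v"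
definition "Dv a u v = 2 * e3 a u v * ev a u v - 4 * cv a u v * d4 a u v - 4 * c2 a u v * dv a u v"

lemma bpf_Du: "bpf Du 5"
proof -
  have 1: "bpf (\<lambda>a u v. 2 * (e3 a u v * eu a u v)) 5" using bpf_scale[OF bpf_mult[OF bpf_e3 bpf_eu]] by simp
  have 2: "bpf (\<lambda>a u v. 4 * (cu a u v * d4 a u v)) 5" using bpf_scale[OF bpf_mult[OF bpf_cu bpf_d4]] by simp
  have 3: "bpf (\<lambda>a u v. 4 * (c2 a u v * du a u v)) 5" using bpf_scale[OF bpf_mult[OF bpf_c2 bpf_du]] by simp
  show ?thesis by (rule bpf_cong[OF bpf_sub[OF bpf_sub[OF 1 2] 3]]) (simp add: Du_def algebra_simps)
qed

lemma bpf_Dv: "bpf Dv 5"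
proof -
  have 1: "bpf (\<lambda>a u v. 2 * (e3 a u v * ev a u v)) 5" using bpf_scale[OF bpf_mult[OF bpf_e3 bpf_ev]] by simp
  have 2: "bpf (\<lambda>a u v. 4 * (cv a u v * d4 a u v)) 5" using bpf_scale[OF bpf_mult[OF bpf_cv bpf_d4]] by simp
  have 3: "bpf (\<lambda>a u v. 4 * (c2 a u v * dv a u v)) 5" using bpf_scale[OF bpf_mult[OF bpf_c2 bpf_dv]] by simp
  show ?thesis by (rule bpf_cong[OF bpf_sub[OF bpf_sub[OF 1 2] 3]]) (simp add: Dv_def algebra_simps)
qed

definition "Cs a s t = 2 * s * (cu a (s^2) (t^2) * (s*t)^2 + eu a (s^2) (t^2) * (s*t) + du a (s^2) (t^2))
   + t*(2*c2 a (s^2) (t^2) * (s*t) + e3 a (s^2) (t^2))"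
definition "Ct a s t = 2 * t * (cv a (s^2) (t^2) * (s*t)^2 + ev a (s^2) (t^2) * (s*t) + dv a (s^2) (t^2))
   + s*(2*c2 a (s^2) (t^2) * (s*t) + e3 a (s^2) (t^2))"

lemma bpf_st2: "bpf (\<lambda>a s t. (s*t)^2) 4"
  by (rule bpf_cong[OF bpf_mono[of "\<lambda>a. 1" 2 4]]) (auto intro: polyfun.pf_const simp: power_mult_distrib)
lemma bpf_st: "bpf (\<lambda>a s t. s*t) 2"
  by (rule bpf_cong[OF bpf_mono[of "\<lambda>a. 1" 1 2]]) (auto intro: polyfun.pf_const)

lemma bpf_Cgen:
  assumes X: "bpf X 1" and Y: "bpf Y 2" and Z: "bpf Z 3"
    and V: "bpf P 1" and W: "bpf Q 1"
  shows "bpf (\<lambda>a s t. 2 * P a s t * (X a (s^2) (t^2) * (s*t)^2 + Y a (s^2) (t^2) * (s*t) + Z a (s^2) (t^2))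
   + Q a s t*(2*c2 a (s^2) (t^2) * (s*t) + e3 a (s^2) (t^2))) 7"
proof -
  have x: "bpf (\<lambda>a s t. X a (s^2) (t^2) * (s*t)^2) 6" using bpf_mult[OF bpf_sq[OF X] bpf_st2] by simp
  have y: "bpf (\<lambda>a s t. Y a (s^2) (t^2) * (s*t)) 6" using bpf_mult[OF bpf_sq[OF Y] bpf_st] by simp
  have z: "bpf (\<lambda>a s t. Z a (s^2) (t^2)) 6" using bpf_sq[OF Z] by simp
  have xyz: "bpf (\<lambda>a s t. P a s t * (X a (s^2) (t^2) * (s*t)^2 + Y a (s^2) (t^2) * (s*t) + Z a (s^2) (t^2))) 7"
    using bpf_mult[OF V bpf_add[OF bpf_add[OF x y] z]] by simp
  have c: "bpf (\<lambda>a s t. 2 * (c2 a (s^2) (t^2) * (s*t))) 6" using bpf_scale[OF bpf_mult[OF bpf_sq[OF bpf_c2] bpf_st]] by simp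
  have e: "bpf (\<lambda>a s t. e3 a (s^2) (t^2)) 6" using bpf_sq[OF bpf_e3] by simp
  have ce: "bpf (\<lambda>a s t. Q a s t * (2 * (c2 a (s^2) (t^2) * (s*t)) + e3 a (s^2) (t^2))) 7"
    using bpf_mult[OF W bpf_add[OF c e]] by simp
  show ?thesis by (rule bpf_cong[OF bpf_add[OF bpf_scale[OF xyz, of 2] ce]]) (simp add: algebra_simps)
qed

lemma bpf_Cs: "bpf Cs 7"
  by (rule bpf_cong[OF bpf_Cgen[OF bpf_cu bpf_eu bpf_du bpf_var(1) bpf_var(2)]]) (simp add: Cs_def)

lemma bpf_Ct: "bpf Ct 7"
proof -
  have "bpf (\<lambda>a s t. 2 * t * (cv a (s^2) (t^2) * (s*t)^2 + ev a (s^2) (t^2) * (s*t) + dv a (s^2) (t^2))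
   + s*(2*c2 a (s^2) (t^2) * (s*t) + e3 a (s^2) (t^2))) 7"
    by (rule bpf_cong[OF bpf_Cgen[OF bpf_cv bpf_ev bpf_dv bpf_var(2) bpf_var(1)]]) (simp add: algebra_simps)
  then show ?thesis by (rule bpf_cong) (simp add: Ct_def)
qed

lemma coef_unique:
  assumes "\<forall>u v. (\<Sum>i\<le>n. \<alpha> i * u^i * v^(n-i)) = (\<Sum>i\<le>n. \<beta> i * (u::complex)^i * v^(n-i))" "i \<le> n"
  shows "\<alpha> i = \<beta> i"
proof -
  have "\<forall>u. (\<Sum>i\<le>n. \<alpha> i * u^i) = (\<Sum>i\<le>n. \<beta> i * (u::complex)^i)"
    using assms(1) by (metis (no_types, lifting) mult.right_neutral power_one sum.cong)
  then show ?thesis using polyfun_eq_coeffs[where c=\<alpha> and d=\<beta> and n=n] assms(2) by blast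
qed

lemma sing_iff_coords:
  "sing_point (quarticK a) x \<longleftrightarrow> x \<noteq> 0 \<and> Fq a (x$1) (x$2) (x$3) (x$4) = 0 \<and>
     Fu a (x$1) (x$2) (x$3) (x$4) = 0 \<and> Fv a (x$1) (x$2) (x$3) (x$4) = 0 \<and>
     Fw a (x$1) (x$2) (x$3) (x$4) = 0 \<and> Fy (x$1) (x$2) (x$3) (x$4) = 0"
  unfolding sing_point_def pderiv_K quarticK_coords forall_4 by (simp add: Dq_def dl_def)

lemma y0_case:
  assumes "Fq a u v w 0 = 0" "Fu a u v w 0 = 0" "Fv a u v w 0 = 0" "Fw a u v w 0 = 0"
  shows "Du a u v = 0" "Dv a u v = 0"
proof -
  have "Fq a u v w 0 = - (c2 a u v * w^2 + e3 a u v * w + d4 a u v)" by (simp add: Fq_def)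
  then have G: "c2 a u v * w^2 + e3 a u v * w + d4 a u v = 0" using assms(1) by (metis neg_equal_0_iff_equal)
  have "Fu a u v w 0 = - (cu a u v * w^2 + eu a u v * w + du a u v)" by (simp add: Fu_def)
  then have Gu: "cu a u v * w^2 + eu a u v * w + du a u v = 0" using assms(2) by (metis neg_equal_0_iff_equal)
  have "Fv a u v w 0 = - (cv a u v * w^2 + ev a u v * w + dv a u v)" by (simp add: Fv_def)
  then have Gv: "cv a u v * w^2 + ev a u v * w + dv a u v = 0" using assms(3) by (metis neg_equal_0_iff_equal)
  have "Fw a u v w 0 = - (2 * c2 a u v * w + e3 a u v)" by (simp add: Fw_def)
  then have Gw: "2 * c2 a u v * w + e3 a u v = 0" using assms(4) by (metis neg_equal_0_iff_equal)
  have "Du a u v = 2 * (2 * c2 a u v * w + e3 a u v) * (2 * cu a u v * w + eu a u v) - 4 * cu a u v * (c2 a u v * w^2 + e3 a u v * w + d4 a u v) - 4 * c2 a u v * (cu a u v * w^2 + eu a u v * w + du a u v)"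
    by (simp add: Du_def algebra_simps power2_eq_square)
  then show "Du a u v = 0" by (simp add: G Gu Gw)
  have "Dv a u v = 2 * (2 * c2 a u v * w + e3 a u v) * (2 * cv a u v * w + ev a u v) - 4 * cv a u v * (c2 a u v * w^2 + e3 a u v * w + d4 a u v) - 4 * c2 a u v * (cv a u v * w^2 + ev a u v * w + dv a u v)"
    by (simp add: Dv_def algebra_simps power2_eq_square)
  then show "Dv a u v = 0" by (simp add: G Gv Gw)
qed

lemma conic_case:
  assumes "Fu a (s^2) (t^2) (s * t) y = 0" "Fv a (s^2) (t^2) (s * t) y = 0" "Fw a (s^2) (t^2) (s * t) y = 0"
  shows "Cs a s t = 0" "Ct a s t = 0"
proof -
  have Gu: "cu a (s^2) (t^2) * (s * t)^2 + eu a (s^2) (t^2) * (s * t) + du a (s^2) (t^2) = - (t^2 * y^2)"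
    using assms(1) by (simp add: Fu_def algebra_simps)
  have Gv: "cv a (s^2) (t^2) * (s * t)^2 + ev a (s^2) (t^2) * (s * t) + dv a (s^2) (t^2) = - (s^2 * y^2)"
    using assms(2) by (simp add: Fv_def algebra_simps)
  have Gw: "2 * c2 a (s^2) (t^2) * (s * t) + e3 a (s^2) (t^2) = 2 * (s * t) * y^2"
    using assms(3) by (simp add: Fw_def algebra_simps)
  show "Cs a s t = 0" unfolding Cs_def Gu Gw by (simp add: algebra_simps power2_eq_square)
  show "Ct a s t = 0" unfolding Ct_def Gv Gw by (simp add: algebra_simps power2_eq_square)
qed

lemma sqrt_param:
  assumes "w^2 = u * (v::complex)"
  shows "\<exists>s t. u = s^2 \<and> v = t^2 \<and> w = s * t"
proof (cases "u = 0")
  case True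
  then have "w = 0" using assms by simp
  then show ?thesis using True by (intro exI[of _ 0] exI[of _ "csqrt v"]) simp
next
  case False
  define s where "s = csqrt u"
  have s2: "s^2 = u" by (simp add: s_def)
  then have "s \<noteq> 0" using False by auto
  have "(w/s)^2 = v" using assms s2 False by (simp add: power_divide)
  moreover have "s * (w/s) = w" using \<open>s \<noteq> 0\<close> by simp
  ultimately show ?thesis using s2 by (intro exI[of _ s] exI[of _ "w/s"]) simp
qed

lemma Fs0: "Fq a 0 0 w y = 0 \<longleftrightarrow> w^2 * y^2 = 0" "Fu a 0 0 w y = 0" "Fv a 0 0 w y = 0" "Fw a 0 0 w y = 2 * w * y^2" "Fy 0 0 w y = 2 * w^2 * y"
  by (simp_all add: Fq_def Fu_def Fv_def Fw_def Fy_def c2e e3e d4e cu_def cv_def eu_def ev_def du_def dv_def)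

lemma sing_p1: "t \<noteq> 0 \<Longrightarrow> sing_point (quarticK a) (t *s p1)"
proof -
  assume "t \<noteq> 0"
  have c: "(t *s p1)$1 = 0" "(t *s p1)$2 = 0" "(t *s p1)$3 = 0" "(t *s p1)$4 = t" by (simp_all add: p1c)
  have "t *s p1 \<noteq> 0" using c(4) \<open>t \<noteq> 0\<close> by (metis zero_index)
  then show ?thesis unfolding sing_iff_coords c Fs0 by simp
qed

lemma sing_p2: "t \<noteq> 0 \<Longrightarrow> sing_point (quarticK a) (t *s p2)"
proof -
  assume "t \<noteq> 0"
  have c: "(t *s p2)$1 = 0" "(t *s p2)$2 = 0" "(t *s p2)$3 = t" "(t *s p2)$4 = 0" by (simp_all add: p2c)
  have "t *s p2 \<noteq> 0" using c(3) \<open>t \<noteq> 0\<close> by (metis zero_index)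
  then show ?thesis unfolding sing_iff_coords c Fs0 by simp
qed

definition "a1w = (\<lambda>i::nat. if i = 0 then 1 else if i = 2 then 1 else if i = 7 then -1/4 else if i = 9 then 1/4 else if i = 11 then -1/4 else (0::complex))"
definition "a2w = (\<lambda>i::nat. if i = 7 then 1 else if i = 11 then 1 else (0::complex))"

lemma Du_w: "Du a1w u v = 6 * u^5"
  by (simp add: Du_def c2e e3e d4e cu_def du_def a1w_def) algebra
lemma Dv_w: "Dv a1w u v = 6 * v^5"
  by (simp add: Dv_def c2e e3e d4e cv_def dv_def a1w_def) algebra
lemma Cs_w: "Cs a2w s t = 8 * s^7"
  by (simp add: Cs_def c2e e3e d4e cu_def eu_def du_def a2w_def) algebra
lemma Ct_w: "Ct a2w s t = 8 * t^7"
  by (simp add: Ct_def c2e e3e d4e cv_def ev_def dv_def a2w_def) algebra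

lemma mono_coef:
  assumes "\<forall>u v. (\<Sum>i\<le>n. \<alpha> i * u^i * v^(n-i)) = c * (u::complex)^k * v^(n-k)" "k \<le> n" "i \<le> n"
  shows "\<alpha> i = (if i = k then c else 0)"
proof -
  have "\<forall>u v. (\<Sum>i\<le>n. \<alpha> i * u^i * v^(n-i)) = (\<Sum>i\<le>n. (if i = k then c else 0) * (u::complex)^i * v^(n-i))"
  proof (intro allI)
    fix u v :: complex
    have "(\<Sum>i\<le>n. (if i = k then c else 0) * u^i * v^(n-i)) = (\<Sum>i\<le>n. if i = k then c * u^i * v^(n-i) else 0)"
      by (rule sum.cong) auto
    also have "\<dots> = c * u^k * v^(n-k)" using assms(2) by simp
    finally show "(\<Sum>i\<le>n. \<alpha> i * u^i * v^(n-i)) = (\<Sum>i\<le>n. (if i = k then c else 0) * u^i * v^(n-i))"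
      using assms(1) by metis
  qed
  from coef_unique[where \<beta>="\<lambda>i. if i = k then c else 0", OF this assms(3)] show ?thesis .
qed

theorem lemma4p5:
  shows "\<exists>P \<in> polyfun. (\<exists>a. P a \<noteq> 0) \<and>
    (\<forall>a. P a \<noteq> 0 \<longrightarrow>
       (\<forall>x. sing_point (quarticK a) x \<longleftrightarrow> (\<exists>t. t \<noteq> 0 \<and> (x = t *s p1 \<or> x = t *s p2)))
     \<and> A1_point (quarticK a) p1 \<and> A1_point (quarticK a) p2)"
proof -
  obtain \<alpha>u where \<alpha>u: "\<forall>i. \<alpha>u i \<in> polyfun" "\<forall>a u v. Du a u v = (\<Sum>i\<le>5. \<alpha>u i a * u^i * v^(5-i))"
    using bpf_Du unfolding bpf_def by blast
  obtain \<alpha>v where \<alpha>v: "\<forall>i. \<alpha>v i \<in> polyfun" "\<forall>a u v. Dv a u v = (\<Sum>i\<le>5. \<alpha>v i a * u^i * v^(5-i))"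
    using bpf_Dv unfolding bpf_def by blast
  obtain \<alpha>s where \<alpha>s: "\<forall>i. \<alpha>s i \<in> polyfun" "\<forall>a u v. Cs a u v = (\<Sum>i\<le>7. \<alpha>s i a * u^i * v^(7-i))"
    using bpf_Cs unfolding bpf_def by blast
  obtain \<alpha>t where \<alpha>t: "\<forall>i. \<alpha>t i \<in> polyfun" "\<forall>a u v. Ct a u v = (\<Sum>i\<le>7. \<alpha>t i a * u^i * v^(7-i))"
    using bpf_Ct unfolding bpf_def by blast
  obtain idx1 :: "10 \<Rightarrow> nat" where bij1: "bij_betw idx1 UNIV {..<5+5}"
    using ex_bij_betw_finite_nat[of "UNIV :: 10 set"] by (auto simp: atLeast0LessThan)
  obtain idx2 :: "14 \<Rightarrow> nat" where bij2: "bij_betw idx2 UNIV {..<7+7}"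
    using ex_bij_betw_finite_nat[of "UNIV :: 14 set"] by (auto simp: atLeast0LessThan)
  define R1 where "R1 a = det ((\<chi> i j. sylm (\<lambda>k. \<alpha>v k a) 5 (\<lambda>k. \<alpha>u k a) 5 (idx1 i) (idx1 j)) :: complex^10^10)" for a
  define R2 where "R2 a = det ((\<chi> i j. sylm (\<lambda>k. \<alpha>t k a) 7 (\<lambda>k. \<alpha>s k a) 7 (idx2 i) (idx2 j)) :: complex^14^14)" for a
  define disc where "disc a = 4 * a 0 * a 2 - (a 1)^2" for a :: "nat \<Rightarrow> complex"
  define P where "P a = disc a * R1 a * R2 a" for a
  have pR1: "R1 \<in> polyfun"
    using syl_det_polyfun[OF \<alpha>v(1) \<alpha>u(1), of 5 5 idx1] unfolding R1_def by simp
  have pR2: "R2 \<in> polyfun"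
    using syl_det_polyfun[OF \<alpha>t(1) \<alpha>s(1), of 7 7 idx2] unfolding R2_def by simp
  have pdisc: "disc \<in> polyfun"
  proof -
    have "(\<lambda>a. (4 * a 0) * a 2 + (-1) * (a 1 * a 1)) \<in> polyfun"
      by (intro polyfun.pf_add polyfun.pf_mult polyfun.pf_const polyfun.pf_var)
    moreover have "(\<lambda>a. (4 * a 0) * a 2 + (-1) * (a 1 * a 1)) = disc"
      by (auto simp: disc_def power2_eq_square fun_eq_iff)
    ultimately show ?thesis by simp
  qed
  have pdR1: "(\<lambda>a. disc a * R1 a) \<in> polyfun" using pdisc pR1 polyfun.pf_mult by blast
  have pP: "P \<in> polyfun" unfolding P_def using pdR1 pR2 polyfun.pf_mult by blast
  have w0: "disc (\<lambda>i. if i = 0 then 1 else if i = 2 then 1 else 0) \<noteq> 0" by (simp add: disc_def)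
  have w1: "R1 a1w \<noteq> 0"
  proof -
    have cu: "\<alpha>u i a1w = (if i = 5 then 6 else 0)" if "i \<le> 5" for i
      by (rule mono_coef[where n=5]) (use \<alpha>u(2) Du_w that in auto)
    have cv: "\<alpha>v i a1w = (if i = 0 then 6 else 0)" if "i \<le> 5" for i
      by (rule mono_coef[where n=5]) (use \<alpha>v(2) Dv_w that in auto)
    show ?thesis unfolding R1_def
      by (rule syl_det_diag[OF bij1]) (use cu cv in auto)
  qed
  have w2: "R2 a2w \<noteq> 0"
  proof -
    have cs: "\<alpha>s i a2w = (if i = 7 then 8 else 0)" if "i \<le> 7" for i
      by (rule mono_coef[where n=7]) (use \<alpha>s(2) Cs_w that in auto)
    have ct: "\<alpha>t i a2w = (if i = 0 then 8 else 0)" if "i \<le> 7" for i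
      by (rule mono_coef[where n=7]) (use \<alpha>t(2) Ct_w that in auto)
    show ?thesis unfolding R2_def
      by (rule syl_det_diag[OF bij2]) (use cs ct in auto)
  qed
  obtain b where b: "disc b * R1 b \<noteq> 0" using polyfun_mult_nz[OF pdisc pR1 w0 w1] by blast
  obtain c where c: "disc c * R1 c * R2 c \<noteq> 0" using polyfun_mult_nz[OF pdR1 pR2 b w2] by blast
  have ex: "\<exists>a. P a \<noteq> 0" using c unfolding P_def by blast
  have main: "(\<forall>x. sing_point (quarticK a) x \<longleftrightarrow> (\<exists>t. t \<noteq> 0 \<and> (x = t *s p1 \<or> x = t *s p2)))
     \<and> A1_point (quarticK a) p1 \<and> A1_point (quarticK a) p2" if Pa: "P a \<noteq> 0" for a
  proof -
    have d: "disc a \<noteq> 0" and r1: "R1 a \<noteq> 0" and r2: "R2 a \<noteq> 0" using Pa by (auto simp: P_def)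
    have sing: "sing_point (quarticK a) x \<longleftrightarrow> (\<exists>t. t \<noteq> 0 \<and> (x = t *s p1 \<or> x = t *s p2))" for x
    proof
      assume "\<exists>t. t \<noteq> 0 \<and> (x = t *s p1 \<or> x = t *s p2)"
      then show "sing_point (quarticK a) x" using sing_p1 sing_p2 by blast
    next
      assume S: "sing_point (quarticK a) x"
      define u where "u = x$1"
      define v where "v = x$2"
      define w where "w = x$3"
      define y where "y = x$4"
      have x0: "x \<noteq> 0" and F: "Fq a u v w y = 0" and Fu: "Fu a u v w y = 0" and Fv: "Fv a u v w y = 0"
        and Fw: "Fw a u v w y = 0" and Fy: "Fy u v w y = 0"
        using S unfolding sing_iff_coords u_def v_def w_def y_def by auto
      have nz: "\<not> (u = 0 \<and> v = 0 \<and> w = 0 \<and> y = 0)"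
      proof
        assume "u = 0 \<and> v = 0 \<and> w = 0 \<and> y = 0"
        then have "x = 0" unfolding vec_eq_iff forall_4 u_def v_def w_def y_def by simp
        with x0 show False by simp
      qed
      show "\<exists>t. t \<noteq> 0 \<and> (x = t *s p1 \<or> x = t *s p2)"
      proof (cases "u = 0 \<and> v = 0")
        case True
        then have "w^2 * y = 0" "w * y^2 = 0" using Fy Fw by (auto simp: Fs0)
        then have "w = 0 \<or> y = 0" by auto
        then show ?thesis
        proof
          assume "w = 0"
          then have "y \<noteq> 0" using nz True by blast
          moreover have "x = y *s p1" using True \<open>w = 0\<close> unfolding u_def v_def w_def y_def by (simp add: vec_eq_iff forall_4 p1c)
          ultimately show ?thesis by blast
        next
          assume "y = 0"
          then have "w \<noteq> 0" using nz True by blast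
          moreover have "x = w *s p2" using True \<open>y = 0\<close> unfolding u_def v_def w_def y_def by (simp add: vec_eq_iff forall_4 p2c)
          ultimately show ?thesis by blast
        qed
      next
        case False
        then have uv: "u \<noteq> 0 \<or> v \<noteq> 0" by blast
        have "(w^2 - u * v) * y = 0" using Fy by (simp add: Fy_def)
        then have "y = 0 \<or> w^2 = u * v" by auto
        then show ?thesis
        proof
          assume "y = 0"
          then have "Du a u v = 0" "Dv a u v = 0" using y0_case F Fu Fv Fw by auto
          then have "R1 a = 0" unfolding R1_def
            by (intro syl_det_zero[OF bij1 _ _ uv]) (use \<alpha>u(2) \<alpha>v(2) in auto)
          then show ?thesis using r1 by blast
        next
          assume "w^2 = u * v"
          then obtain s t where st: "u = s^2" "v = t^2" "w = s * t" using sqrt_param by blast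
          then have st0: "s \<noteq> 0 \<or> t \<noteq> 0" using uv by auto
          have "Cs a s t = 0" "Ct a s t = 0" using conic_case[of a s t y] Fu Fv Fw st by auto
          then have "R2 a = 0" unfolding R2_def
            by (intro syl_det_zero[OF bij2 _ _ st0]) (use \<alpha>s(2) \<alpha>t(2) in auto)
          then show ?thesis using r2 by blast
        qed
      qed
    qed
    have "sing_point (quarticK a) p1" using sing_p1[of 1 a] by simp
    moreover have "sing_point (quarticK a) p2" using sing_p2[of 1 a] by simp
    moreover have "rank (hessian4 (quarticK a) p2) = 3" using rank_p2 d by (simp add: disc_def)
    ultimately show ?thesis using sing rank_p1 by (simp add: A1_point_def)
  qed
  show ?thesis using pP ex main by blast
qed

end
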